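(* Let $\mathcal{S}$ and $\mathcal{A}$ be finite sets and consider a Markov decision process in which, for each $(s,a)\in\mathcal{S}\times\mathcal{A}$, the pair (random reward, next state) $(\tilde r(s,a),\tilde s')$ has joint law $P(\cdot,\cdot\mid s,a)$, with $\tilde r(s,a)\in[0,1]$ almost surely and $\tilde r(s,a)$ having a bounded density for every $(s,a)$. Let $\gamma\in(0,1)$, let $\rho$ be a coherent risk measure, and let $d$ be a probability distribution on $\mathcal{S}$ with $0<d(s)\le 1$ for all $s$. Consider softmax policies $\pi_\theta(a\mid s)=\exp(\theta(s,a))/\sum_{b\in\mathcal{A}}\exp(\theta(s,b))$, $\theta\in\mathbb{R}^{\mathcal{S}\times\mathcal{A}}$, and the iteration $$\theta_{t+1}=\theta_t+\eta\,\nabla_\theta\Big[\sum_{s} d(s)\sum_a \pi_\theta(a\mid s)\,Q^{\pi_t}(s,a)\Big]\Big|_{\theta=\theta_t},$$ where $\pi_t:=\pi_{\theta_t}$ and $Q^{\pi_t}$ is held fixed (not differentiated); equivalently $\theta_{t+1}(s,a)=\theta_t(s,a)+\eta\, d(s)\pi_t(a\mid s)\big(Q^{\pi_t}(s,a)-V^{\pi_t}(s)\big)$. If $\eta\le(1-\gamma)/5$, then for every $t$ and all $(s,a)\in\mathcal{S}\times\mathcal{A}$, $$Q^{\pi_{t+1}}(s,a)\ge Q^{\pi_t}(s,a)\quad\text{and}\quad V^{\pi_{t+1}}(s)\ge V^{\pi_t}(s).$$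
   Context: A risk measure $\rho$ maps a real random variable (a return) to $\mathbb{R}\cup\{\pm\infty\}$. It is coherent if for all random variables $\tilde x,\tilde y$: (concavity) $\rho(\lambda\tilde x+(1-\lambda)\tilde y)\ge\lambda\rho(\tilde x)+(1-\lambda)\rho(\tilde y)$ for $\lambda\in[0,1]$; (monotonicity) $\tilde x\le\tilde y$ implies $\rho(\tilde x)\le\rho(\tilde y)$; (translation invariance) $\rho(\tilde x+c)=\rho(\tilde x)+c$ for $c\in\mathbb{R}$; (positive homogeneity) $\rho(\lambda\tilde x)=\lambda\rho(\tilde x)$ for $\lambda\ge0$. Examples are the $\alpha$-expectile and the left-tail $\alpha$-CVaR. For a stochastic Markov policy $\pi$, the Bellman operator is $(\mathcal{T}^\pi Q)(s,a)=\rho\big(\tilde r(s,a)+\gamma\sum_{a'}\pi(a'\mid\tilde s')Q(\tilde s',a')\big)$, where $\rho$ is taken over the joint randomness of $(\tilde r(s,a),\tilde s')\sim P(\cdot,\cdot\mid s,a)$. $Q^\pi$ denotes the unique fixed point of $\mathcal{T}^\pi$ (the dynamic-risk action-value function of $\pi$), and $V^\pi(s)=\sum_a\pi(a\mid s)Q^\pi(s,a)$. *)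

theory Defs
  imports "HOL-Probability.Probability"
begin

definition coherent_risk :: "'b measure \<Rightarrow> (('b \<Rightarrow> real) \<Rightarrow> ereal) \<Rightarrow> bool" where
  "coherent_risk M R \<longleftrightarrow>
     (\<forall>X\<in>borel_measurable M. \<forall>Y\<in>borel_measurable M. \<forall>l::real. 0 \<le> l \<and> l \<le> 1 \<longrightarrow>
        R (\<lambda>w. l * X w + (1 - l) * Y w) \<ge> ereal l * R X + ereal (1 - l) * R Y) \<and>
     (\<forall>X\<in>borel_measurable M. \<forall>Y\<in>borel_measurable M.
        (\<forall>w\<in>space M. X w \<le> Y w) \<longrightarrow> R X \<le> R Y) \<and>
     (\<forall>X\<in>borel_measurable M. \<forall>c::real. R (\<lambda>w. X w + c) = R X + ereal c) \<and>
     (\<forall>X\<in>borel_measurable M. \<forall>l::real. 0 \<le> l \<longrightarrow> R (\<lambda>w. l * X w) = ereal l * R X)"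

definition softmax :: "('s \<Rightarrow> 'a::finite \<Rightarrow> real) \<Rightarrow> 's \<Rightarrow> 'a \<Rightarrow> real" where
  "softmax \<theta> s a = exp (\<theta> s a) / (\<Sum>b\<in>UNIV. exp (\<theta> s b))"

text \<open>Bellman operator of a stochastic Markov policy pi for the dynamic risk measure rho;
  P s a is the joint law of (reward, next state).\<close>
definition bellman ::
  "((real \<times> 's) measure \<Rightarrow> ((real \<times> 's) \<Rightarrow> real) \<Rightarrow> ereal) \<Rightarrow>
   ('s \<Rightarrow> 'a \<Rightarrow> (real \<times> 's) measure) \<Rightarrow> real \<Rightarrow>
   ('s \<Rightarrow> 'a::finite \<Rightarrow> real) \<Rightarrow> ('s \<Rightarrow> 'a \<Rightarrow> real) \<Rightarrow> 's \<Rightarrow> 'a \<Rightarrow> ereal" where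
  "bellman \<rho> P \<gamma> \<pi> Q s a =
     \<rho> (P s a) (\<lambda>(r, s'). r + \<gamma> * (\<Sum>a'\<in>UNIV. \<pi> s' a' * Q s' a'))"

definition Qpi ::
  "((real \<times> 's) measure \<Rightarrow> ((real \<times> 's) \<Rightarrow> real) \<Rightarrow> ereal) \<Rightarrow>
   ('s \<Rightarrow> 'a \<Rightarrow> (real \<times> 's) measure) \<Rightarrow> real \<Rightarrow>
   ('s \<Rightarrow> 'a::finite \<Rightarrow> real) \<Rightarrow> 's \<Rightarrow> 'a \<Rightarrow> real" where
  "Qpi \<rho> P \<gamma> \<pi> = (THE Q. \<forall>s a. ereal (Q s a) = bellman \<rho> P \<gamma> \<pi> Q s a)"

definition Vpi ::
  "((real \<times> 's) measure \<Rightarrow> ((real \<times> 's) \<Rightarrow> real) \<Rightarrow> ereal) \<Rightarrow>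
   ('s \<Rightarrow> 'a \<Rightarrow> (real \<times> 's) measure) \<Rightarrow> real \<Rightarrow>
   ('s \<Rightarrow> 'a::finite \<Rightarrow> real) \<Rightarrow> 's \<Rightarrow> real" where
  "Vpi \<rho> P \<gamma> \<pi> s = (\<Sum>a\<in>UNIV. \<pi> s a * Qpi \<rho> P \<gamma> \<pi> s a)"

end

theory Submission
  imports Defs "HOL-Analysis.Analysis"
begin

lemma fixpoint_exists:
  fixes T :: "('i::finite \<Rightarrow> real) \<Rightarrow> ('i \<Rightarrow> real)" and \<gamma> :: real
  assumes g: "\<gamma> < 1"
    and con: "\<And>f g c x. (\<forall>y. \<bar>f y - g y\<bar> \<le> c) \<Longrightarrow> \<bar>T f x - T g x\<bar> \<le> \<gamma> * c"
  shows "\<exists>f. T f = f"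
proof -
  define FS where "FS = (Met_TC.fspace (UNIV::'i set) :: ('i \<Rightarrow> real) set)"
  define FD where "FD = (Met_TC.fdist (UNIV::'i set) :: ('i \<Rightarrow> real) \<Rightarrow> _)"
  interpret F: Metric_space FS FD
    unfolding FS_def FD_def by (simp add: Met_TC.Metric_space_funspace)
  have sp: "FS = UNIV"
    by (auto simp: FS_def Met_TC.fspace_def)
  have mc: "F.mcomplete"
  proof -
    have c1: "Metric_space.mcomplete (UNIV::real set) dist"
      using complete_UNIV by simp
    have "mcomplete_of (funspace (UNIV::'i set) (Met_TC.Self :: real metric))"
      by (rule Metric_space.mcomplete_funspace[OF Met_TC.Metric_space_axioms c1])
    then show ?thesis by (simp add: mcomplete_of_def FS_def FD_def)
  qed
  have le: "\<bar>f y - g y\<bar> \<le> FD f g" for f g :: "'i \<Rightarrow> real" and y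
    using Met_TC.funspace_mdist_le[of f UNIV g "FD f g"] sp
    by (auto simp: dist_real_def FS_def FD_def)
  obtain x where "x \<in> FS" "T x = x"
  proof (rule F.Banach_fixedpoint_thm[OF mc, of T "max \<gamma> 0"])
    show "FS \<noteq> {}" using sp by simp
    show "T \<in> FS \<rightarrow> FS" using sp by simp
    show "max \<gamma> 0 < 1" using g by simp
    fix f g :: "'i \<Rightarrow> real"
    assume "f \<in> FS" "g \<in> FS"
    have "\<forall>x. dist (T f x) (T g x) \<le> max \<gamma> 0 * FD f g"
    proof
      fix x
      have "\<bar>T f x - T g x\<bar> \<le> \<gamma> * FD f g" using con le by blast
      moreover have "0 \<le> FD f g" using order.trans[OF abs_ge_zero le] by blast
      ultimately show "dist (T f x) (T g x) \<le> max \<gamma> 0 * FD f g"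
        using mult_right_mono[of \<gamma> "max \<gamma> 0" "FD f g"] by (auto simp: dist_real_def)
    qed
    then show "FD (T f) (T g) \<le> max \<gamma> 0 * FD f g"
      using Met_TC.funspace_mdist_le[of "T f" UNIV "T g"] sp by (auto simp: FS_def FD_def)
  qed auto
  then show ?thesis by blast
qed

lemma X_meas:
  assumes "sets M = sets (borel \<Otimes>\<^sub>M count_space (UNIV::'s set))"
  shows "(\<lambda>(r::real, s'::'s). r + g s') \<in> borel_measurable M"
  apply (subst measurable_cong_sets[OF assms refl])
  apply measurable
  apply (rule measurable_compose[OF measurable_snd])
  apply simp
  done

lemma R_mono:
  assumes coh: "coherent_risk M R" and sets: "sets M = sets (borel \<Otimes>\<^sub>M count_space (UNIV::'s set))"
    and le: "\<And>x. g x \<le> h x"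
  shows "R (\<lambda>(r::real, s'::'s). r + g s') \<le> R (\<lambda>(r, s'). r + h s')"
proof -
  have "\<forall>X\<in>borel_measurable M. \<forall>Y\<in>borel_measurable M.
        (\<forall>w\<in>space M. X w \<le> Y w) \<longrightarrow> R X \<le> R Y"
    using coh unfolding coherent_risk_def by blast
  moreover have "\<forall>w\<in>space M. (\<lambda>(r::real, s'::'s). r + g s') w \<le> (\<lambda>(r, s'). r + h s') w"
    using le by (auto split: prod.splits)
  ultimately show ?thesis using X_meas[OF sets, of g] X_meas[OF sets, of h]
    by blast
qed

lemma R_trans:
  assumes coh: "coherent_risk M R" and sets: "sets M = sets (borel \<Otimes>\<^sub>M count_space (UNIV::'s set))"
  shows "R (\<lambda>(r::real, s'::'s). r + (g s' + c)) = R (\<lambda>(r, s'). r + g s') + ereal c"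
proof -
  have "\<forall>X\<in>borel_measurable M. \<forall>c::real. R (\<lambda>w. X w + c) = R X + ereal c"
    using coh unfolding coherent_risk_def by blast
  then have "R (\<lambda>w. (\<lambda>(r::real, s'::'s). r + g s') w + c) = R (\<lambda>(r, s'). r + g s') + ereal c"
    using X_meas[OF sets, of g] by blast
  moreover have "(\<lambda>w. (\<lambda>(r::real, s'::'s). r + g s') w + c) = (\<lambda>(r, s'). r + (g s' + c))"
    by (auto simp: fun_eq_iff)
  ultimately show ?thesis by simp
qed

lemma R_fin_iff:
  assumes coh: "coherent_risk M R" and sets: "sets M = sets (borel \<Otimes>\<^sub>M count_space (UNIV::'s::finite set))"
  shows "\<bar>R (\<lambda>(r::real, s'::'s). r + g s')\<bar> \<noteq> \<infinity> \<longleftrightarrow> \<bar>R (\<lambda>(r, s'). r + h s')\<bar> \<noteq> \<infinity>"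
proof -
  define c where "c = (\<Sum>x\<in>UNIV. \<bar>g x - h x\<bar>)"
  have b: "\<bar>g x - h x\<bar> \<le> c" for x
    unfolding c_def by (rule member_le_sum) auto
  have b2: "g x \<le> h x + c \<and> h x \<le> g x + c" for x
    using b[of x] by (auto simp: abs_le_iff)
  have "R (\<lambda>(r, s'). r + g s') \<le> R (\<lambda>(r, s'). r + (h s' + c))"
    by (rule R_mono[OF coh sets]) (use b2 in auto)
  then have 1: "R (\<lambda>(r, s'). r + g s') \<le> R (\<lambda>(r, s'). r + h s') + ereal c"
    using R_trans[OF coh sets] by metis
  have "R (\<lambda>(r, s'). r + h s') \<le> R (\<lambda>(r, s'). r + (g s' + c))"
    by (rule R_mono[OF coh sets]) (use b2 in auto)
  then have 2: "R (\<lambda>(r, s'). r + h s') \<le> R (\<lambda>(r, s'). r + g s') + ereal c"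
    using R_trans[OF coh sets] by metis
  show ?thesis using 1 2
    by (cases "R (\<lambda>(r, s'). r + g s')"; cases "R (\<lambda>(r, s'). r + h s')") auto
qed


lemma stoch_sum_le:
  fixes p :: "'a::finite \<Rightarrow> real"
  assumes "\<And>a. 0 \<le> p a" "(\<Sum>a\<in>UNIV. p a) = 1" "\<And>a. f a \<le> g a + c"
  shows "(\<Sum>a\<in>UNIV. p a * f a) \<le> (\<Sum>a\<in>UNIV. p a * g a) + c"
proof -
  have "(\<Sum>a\<in>UNIV. p a * f a) \<le> (\<Sum>a\<in>UNIV. p a * (g a + c))"
    by (rule sum_mono) (use assms in \<open>auto intro: mult_left_mono\<close>)
  also have "\<dots> = (\<Sum>a\<in>UNIV. p a * g a) + c * (\<Sum>a\<in>UNIV. p a)"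
    by (simp add: algebra_simps sum.distrib sum_distrib_left)
  finally show ?thesis using assms(2) by simp
qed

lemma comparison:
  fixes F :: "'s::finite \<Rightarrow> 'a::finite \<Rightarrow> ('s \<Rightarrow> real) \<Rightarrow> real"
  assumes monoH: "\<forall>s a g h. (\<forall>x. g x \<le> h x) \<longrightarrow> F s a g \<le> F s a h"
    and transH: "\<forall>s a g c. F s a (\<lambda>x. g x + c) = F s a g + c"
    and \<gamma>: "0 \<le> \<gamma>" "\<gamma> < 1"
    and \<pi>: "\<And>s a. 0 \<le> \<pi> s a" "\<And>s. (\<Sum>a\<in>UNIV. \<pi> s a) = 1"
    and QA: "\<And>s a. QA s a \<le> F s a (\<lambda>s'. \<gamma> * (\<Sum>a'\<in>UNIV. \<pi> s' a' * QA s' a'))"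
    and QB: "\<And>s a. QB s a = F s a (\<lambda>s'. \<gamma> * (\<Sum>a'\<in>UNIV. \<pi> s' a' * QB s' a'))"
  shows "QA s a \<le> QB s a"
proof -
  have mono: "F s a g \<le> F s a h" if "\<And>x. g x \<le> h x" for s a g h
    using monoH that by blast
  have trans: "F s a (\<lambda>x. g x + c) = F s a g + c" for s a g c
    using transH by blast
  define M where "M = Max (range (\<lambda>p. QA (fst p) (snd p) - QB (fst p) (snd p)))"
  have Mge: "QA s a - QB s a \<le> M" for s a
    unfolding M_def by (rule Max_ge) (auto intro: image_eqI[of _ _ "(s,a)"])
  have "M \<in> range (\<lambda>p. QA (fst p) (snd p) - QB (fst p) (snd p))"
    unfolding M_def by (rule Max_in) auto
  then obtain s0 a0 where M0: "M = QA s0 a0 - QB s0 a0" by auto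
  have step: "QA s a - QB s a \<le> \<gamma> * M" for s a
  proof -
    have "\<And>x. \<gamma> * (\<Sum>a'\<in>UNIV. \<pi> x a' * QA x a') \<le> \<gamma> * (\<Sum>a'\<in>UNIV. \<pi> x a' * QB x a') + \<gamma> * M"
    proof -
      fix x
      have "(\<Sum>a'\<in>UNIV. \<pi> x a' * QA x a') \<le> (\<Sum>a'\<in>UNIV. \<pi> x a' * QB x a') + M"
        by (rule stoch_sum_le) (use \<pi> Mge in \<open>auto simp: algebra_simps\<close>)
      then show "\<gamma> * (\<Sum>a'\<in>UNIV. \<pi> x a' * QA x a') \<le> \<gamma> * (\<Sum>a'\<in>UNIV. \<pi> x a' * QB x a') + \<gamma> * M"
        using mult_left_mono[OF _ \<gamma>(1)] by (fastforce simp: algebra_simps)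
    qed
    then have "F s a (\<lambda>s'. \<gamma> * (\<Sum>a'\<in>UNIV. \<pi> s' a' * QA s' a')) \<le>
               F s a (\<lambda>s'. \<gamma> * (\<Sum>a'\<in>UNIV. \<pi> s' a' * QB s' a') + \<gamma> * M)"
      by (rule mono)
    also have "\<dots> = F s a (\<lambda>s'. \<gamma> * (\<Sum>a'\<in>UNIV. \<pi> s' a' * QB s' a')) + \<gamma> * M"
      by (rule trans)
    also have "\<dots> = QB s a + \<gamma> * M" using QB[of s a] by simp
    finally show ?thesis using QA[of s a] by simp
  qed
  have "M \<le> 0"
  proof -
    have "M \<le> \<gamma> * M" using step[of s0 a0] M0 by simp
    then have "(1 - \<gamma>) * M \<le> 0" by (simp add: algebra_simps)
    then show ?thesis using \<gamma> by (simp add: mult_le_0_iff)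
  qed
  then show ?thesis using Mge[of s a] by simp
qed

lemma existence:
  fixes F :: "'s::finite \<Rightarrow> 'a::finite \<Rightarrow> ('s \<Rightarrow> real) \<Rightarrow> real"
  assumes monoH: "\<forall>s a g h. (\<forall>x. g x \<le> h x) \<longrightarrow> F s a g \<le> F s a h"
    and transH: "\<forall>s a g c. F s a (\<lambda>x. g x + c) = F s a g + c"
    and \<gamma>: "0 \<le> \<gamma>" "\<gamma> < 1"
    and \<pi>: "\<And>s a. 0 \<le> \<pi> s a" "\<And>s. (\<Sum>a\<in>UNIV. \<pi> s a) = 1"
  shows "\<exists>Q. \<forall>s a. Q s a = F s a (\<lambda>s'. \<gamma> * (\<Sum>a'\<in>UNIV. \<pi> s' a' * Q s' a'))"
proof -
  have mono: "F s a g \<le> F s a h" if "\<And>x. g x \<le> h x" for s a g h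
    using monoH that by blast
  have trans: "F s a (\<lambda>x. g x + c) = F s a g + c" for s a g c
    using transH by blast
  define T where "T = (\<lambda>(q :: 's \<times> 'a \<Rightarrow> real) p.
      F (fst p) (snd p) (\<lambda>s'. \<gamma> * (\<Sum>a'\<in>UNIV. \<pi> s' a' * q (s', a'))))"
  have half: "T f x \<le> T g x + \<gamma> * c" if "\<forall>y. \<bar>f y - g y\<bar> \<le> c" for f g c x
  proof -
    have fg: "f y \<le> g y + c" for y using spec[OF that, of y] by (simp add: abs_le_iff)
    have "\<And>s'. \<gamma> * (\<Sum>a'\<in>UNIV. \<pi> s' a' * f (s', a')) \<le> \<gamma> * (\<Sum>a'\<in>UNIV. \<pi> s' a' * g (s', a')) + \<gamma> * c"
    proof -
      fix s'
      have "(\<Sum>a'\<in>UNIV. \<pi> s' a' * f (s', a')) \<le> (\<Sum>a'\<in>UNIV. \<pi> s' a' * g (s', a')) + c"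
        by (rule stoch_sum_le) (use \<pi> fg in auto)
      then show "\<gamma> * (\<Sum>a'\<in>UNIV. \<pi> s' a' * f (s', a')) \<le> \<gamma> * (\<Sum>a'\<in>UNIV. \<pi> s' a' * g (s', a')) + \<gamma> * c"
        using mult_left_mono[OF _ \<gamma>(1)] by (fastforce simp: algebra_simps)
    qed
    then have "T f x \<le> F (fst x) (snd x) (\<lambda>s'. \<gamma> * (\<Sum>a'\<in>UNIV. \<pi> s' a' * g (s', a')) + \<gamma> * c)"
      unfolding T_def by (auto intro: mono)
    also have "\<dots> = T g x + \<gamma> * c" unfolding T_def using trans by simp
    finally show ?thesis .
  qed
  have "\<exists>q. T q = q"
  proof (rule fixpoint_exists[of \<gamma>])
    show "\<gamma> < 1" by fact
    fix f g :: "'s \<times> 'a \<Rightarrow> real" and c x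
    assume h: "\<forall>y. \<bar>f y - g y\<bar> \<le> c"
    then have h': "\<forall>y. \<bar>g y - f y\<bar> \<le> c" by (simp add: abs_minus_commute)
    show "\<bar>T f x - T g x\<bar> \<le> \<gamma> * c" using half[OF h, of x] half[OF h', of x] by (simp add: abs_le_iff)
  qed
  then obtain q where q: "T q = q" by blast
  show ?thesis
  proof (intro exI allI)
    fix s a
    have "q (s, a) = T q (s, a)" using q by simp
    then show "curry q s a = F s a (\<lambda>s'. \<gamma> * (\<Sum>a'\<in>UNIV. \<pi> s' a' * curry q s' a'))"
      by (simp add: T_def)
  qed
qed

lemma softmax_pos: "0 < softmax \<theta> s a"
  unfolding softmax_def by (intro divide_pos_pos) (auto intro: sum_pos)

lemma softmax_sum: "(\<Sum>a\<in>UNIV. softmax \<theta> s a) = 1"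
proof -
  have "0 < (\<Sum>b\<in>UNIV. exp (\<theta> s b))" by (auto intro: sum_pos)
  then show ?thesis unfolding softmax_def by (simp add: sum_divide_distrib[symmetric])
qed

lemma softmax_improve:
  fixes \<theta> \<theta>' :: "'s \<Rightarrow> 'a::finite \<Rightarrow> real" and Q :: "'a \<Rightarrow> real"
  assumes h: "\<And>a. 0 \<le> (\<theta>' s a - \<theta> s a) * (Q a - (\<Sum>b\<in>UNIV. softmax \<theta> s b * Q b))"
  shows "(\<Sum>a\<in>UNIV. softmax \<theta> s a * Q a) \<le> (\<Sum>a\<in>UNIV. softmax \<theta>' s a * Q a)"
proof -
  define V where "V = (\<Sum>b\<in>UNIV. softmax \<theta> s b * Q b)"
  define Z where "Z = (\<Sum>b\<in>UNIV. exp (\<theta> s b))"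
  define Z' where "Z' = (\<Sum>b\<in>UNIV. exp (\<theta>' s b))"
  have Z: "0 < Z" "0 < Z'" unfolding Z_def Z'_def by (auto intro: sum_pos)
  have termw: "exp (\<theta> s a) * (Q a - V) \<le> exp (\<theta>' s a) * (Q a - V)" for a
  proof (cases "Q a - V" "0::real" rule: linorder_cases)
    case greater
    then have "\<theta> s a \<le> \<theta>' s a" using h[of a] unfolding V_def[symmetric]
      by (simp add: zero_le_mult_iff)
    then show ?thesis using greater by (intro mult_right_mono) auto
  next
    case less
    then have "\<theta>' s a \<le> \<theta> s a" using h[of a] unfolding V_def[symmetric]
      by (simp add: zero_le_mult_iff)
    then show ?thesis using less by (intro mult_right_mono_neg) auto
  qed simp
  have sm: "(\<Sum>a\<in>UNIV. softmax th s a * (Q a - c)) = (\<Sum>a\<in>UNIV. softmax th s a * Q a) - c" for th c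
  proof -
    have "(\<Sum>a\<in>UNIV. softmax th s a * (Q a - c)) = (\<Sum>a\<in>UNIV. softmax th s a * Q a) - (\<Sum>a\<in>UNIV. softmax th s a * c)"
      by (simp add: right_diff_distrib sum_subtractf)
    also have "(\<Sum>a\<in>UNIV. softmax th s a * c) = c"
      using softmax_sum[of th s] by (simp add: sum_distrib_right[symmetric])
    finally show ?thesis .
  qed
  have ex: "(\<Sum>a\<in>UNIV. exp (th s a) * (Q a - c)) = (\<Sum>b\<in>UNIV. exp (th s b)) * (\<Sum>a\<in>UNIV. softmax th s a * (Q a - c))" for th c
  proof -
    have pos: "0 < (\<Sum>b\<in>UNIV. exp (th s b))" by (auto intro: sum_pos)
    have "(\<Sum>b\<in>UNIV. exp (th s b)) * (\<Sum>a\<in>UNIV. softmax th s a * (Q a - c))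
        = (\<Sum>a\<in>UNIV. (\<Sum>b\<in>UNIV. exp (th s b)) * (exp (th s a) / (\<Sum>b\<in>UNIV. exp (th s b)) * (Q a - c)))"
      unfolding softmax_def by (rule sum_distrib_left)
    also have "\<dots> = (\<Sum>a\<in>UNIV. exp (th s a) * (Q a - c))"
      using pos by (intro sum.cong) auto
    finally show ?thesis by simp
  qed
  have "0 = Z * ((\<Sum>a\<in>UNIV. softmax \<theta> s a * Q a) - V)" by (simp add: V_def)
  also have "\<dots> = (\<Sum>a\<in>UNIV. exp (\<theta> s a) * (Q a - V))"
    unfolding Z_def ex sm ..
  also have "\<dots> \<le> (\<Sum>a\<in>UNIV. exp (\<theta>' s a) * (Q a - V))"
    by (rule sum_mono) (rule termw)
  also have "\<dots> = Z' * ((\<Sum>a\<in>UNIV. softmax \<theta>' s a * Q a) - V)"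
    unfolding Z'_def ex sm ..
  finally show ?thesis using Z unfolding V_def by (simp add: zero_le_mult_iff)
qed

theorem lemma1:
  fixes P :: "'s::finite \<Rightarrow> 'a::finite \<Rightarrow> (real \<times> 's) measure"
    and \<rho> :: "(real \<times> 's) measure \<Rightarrow> ((real \<times> 's) \<Rightarrow> real) \<Rightarrow> ereal"
    and \<gamma> \<eta> :: real
    and d :: "'s \<Rightarrow> real"
    and \<theta> :: "nat \<Rightarrow> 's \<Rightarrow> 'a \<Rightarrow> real"
  assumes prob: "\<And>s a. prob_space (P s a)"
    and sets_P: "\<And>s a. sets (P s a) = sets (borel \<Otimes>\<^sub>M count_space UNIV)"
    and rew01: "\<And>s a. AE x in P s a. fst x \<in> {0..1}"
    and dens: "\<And>s a. \<exists>f B. distributed (P s a) lborel fst f \<and> (\<forall>r. f r \<le> ennreal B)"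
    and gamma: "0 < \<gamma>" "\<gamma> < 1"
    and coh: "\<And>s a. coherent_risk (P s a) (\<rho> (P s a))"
    and d_pos: "\<And>s. 0 < d s" and d_le: "\<And>s. d s \<le> 1" and d_sum: "(\<Sum>s\<in>UNIV. d s) = 1"
    and eta: "0 < \<eta>" "\<eta> \<le> (1 - \<gamma>) / 5"
    and iter: "\<And>t s a. \<theta> (Suc t) s a = \<theta> t s a + \<eta> * d s * softmax (\<theta> t) s a *
                 (Qpi \<rho> P \<gamma> (softmax (\<theta> t)) s a - Vpi \<rho> P \<gamma> (softmax (\<theta> t)) s)"
  shows "\<forall>t s a. Qpi \<rho> P \<gamma> (softmax (\<theta> (Suc t))) s a \<ge> Qpi \<rho> P \<gamma> (softmax (\<theta> t)) s a
               \<and> Vpi \<rho> P \<gamma> (softmax (\<theta> (Suc t))) s \<ge> Vpi \<rho> P \<gamma> (softmax (\<theta> t)) s"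
  proof (rule allI)
  fix t
  define \<pi> where "\<pi> = softmax (\<theta> t)"
  define \<pi>' where "\<pi>' = softmax (\<theta> (Suc t))"
  define Q where "Q = Qpi \<rho> P \<gamma> \<pi>"
  have pi_nn: "\<And>th s a. 0 \<le> softmax th s a" by (rule less_imp_le[OF softmax_pos])
  have Vdef: "\<And>pp s. Vpi \<rho> P \<gamma> pp s = (\<Sum>a\<in>UNIV. pp s a * Qpi \<rho> P \<gamma> pp s a)"
    by (simp add: Vpi_def)
  have imp: "(\<Sum>a\<in>UNIV. \<pi> s a * Q s a) \<le> (\<Sum>a\<in>UNIV. \<pi>' s a * Q s a)" for s
    unfolding \<pi>_def \<pi>'_def
  proof (rule softmax_improve)
    fix a
    have "(\<theta> (Suc t) s a - \<theta> t s a) * (Q s a - (\<Sum>b\<in>UNIV. softmax (\<theta> t) s b * Q s b))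
        = \<eta> * d s * softmax (\<theta> t) s a * (Q s a - (\<Sum>b\<in>UNIV. softmax (\<theta> t) s b * Q s b))\<^sup>2"
      using iter[of t s a] by (simp add: Q_def \<pi>_def Vdef power2_eq_square)
    also have "0 \<le> \<dots>" using eta d_pos[of s] pi_nn by (intro mult_nonneg_nonneg) (auto intro: less_imp_le)
    finally show "0 \<le> (\<theta> (Suc t) s a - \<theta> t s a) * (Q s a - (\<Sum>b\<in>UNIV. softmax (\<theta> t) s b * Q s b))"
      by simp
  qed
  have bell: "\<And>pp QQ s a. bellman \<rho> P \<gamma> pp QQ s a =
      \<rho> (P s a) (\<lambda>(r, s'). r + \<gamma> * (\<Sum>a'\<in>UNIV. pp s' a' * QQ s' a'))"
    by (simp add: bellman_def)
  have "\<forall>s a. Q s a \<le> Qpi \<rho> P \<gamma> \<pi>' s a"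
  proof (cases "\<exists>s0 a0. \<bar>\<rho> (P s0 a0) (\<lambda>(r, s'::'s). r + (0::real))\<bar> = \<infinity>")
    case True
    then obtain s0 a0 where inf0: "\<bar>\<rho> (P s0 a0) (\<lambda>(r, s'::'s). r + (0::real))\<bar> = \<infinity>"
      by (elim exE)
    have allinf: "\<bar>\<rho> (P s0 a0) (\<lambda>(r, s'). r + g s')\<bar> = \<infinity>" for g
      using R_fin_iff[OF coh sets_P, of s0 a0 g "\<lambda>_. 0"] inf0 by simp
    have const: "Qpi \<rho> P \<gamma> pp = (THE Q. False)" for pp
    proof -
      have "(\<lambda>QQ. \<forall>s a. ereal (QQ s a) = bellman \<rho> P \<gamma> pp QQ s a) = (\<lambda>QQ. False)"
      proof (rule ext)
        fix QQ
        have "ereal (QQ s0 a0) \<noteq> bellman \<rho> P \<gamma> pp QQ s0 a0"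
          using allinf[of "\<lambda>s'. \<gamma> * (\<Sum>a'\<in>UNIV. pp s' a' * QQ s' a')"] by (auto simp: bell)
        then show "(\<forall>s a. ereal (QQ s a) = bellman \<rho> P \<gamma> pp QQ s a) = False" by blast
      qed
      then show ?thesis unfolding Qpi_def by simp
    qed
    show ?thesis unfolding Q_def using const by simp
  next
    case False
    then have fin: "\<bar>\<rho> (P s a) (\<lambda>(r, s'). r + g s')\<bar> \<noteq> \<infinity>" for s a g
      using R_fin_iff[OF coh sets_P, of s a g "\<lambda>_. 0"] by auto
    define F where "F = (\<lambda>s a g. real_of_ereal (\<rho> (P s a) (\<lambda>(r, s'). r + g s')))"
    have Fe: "ereal (F s a g) = \<rho> (P s a) (\<lambda>(r, s'). r + g s')" for s a g
      unfolding F_def using fin[of s a g] by (simp add: ereal_real')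
    have mono: "F s a g \<le> F s a h" if "\<And>x. g x \<le> h x" for s a g h
      using R_mono[OF coh sets_P, of g h s a] that by (simp add: Fe[symmetric])
    have trans: "F s a (\<lambda>x. g x + c) = F s a g + c" for s a g c
      using R_trans[OF coh sets_P, of s a g c] by (simp add: Fe[symmetric])
    have monoH: "\<forall>s a g h. (\<forall>x. g x \<le> h x) \<longrightarrow> F s a g \<le> F s a h"
      by (blast intro: mono)
    have transH: "\<forall>s a g c. F s a (\<lambda>x. g x + c) = F s a g + c"
      by (simp add: trans)
    have gam: "0 \<le> \<gamma>" "\<gamma> < 1" using gamma by auto
    have fixp: "Qpi \<rho> P \<gamma> (softmax th) s a =
        F s a (\<lambda>s'. \<gamma> * (\<Sum>a'\<in>UNIV. softmax th s' a' * Qpi \<rho> P \<gamma> (softmax th) s' a'))" for th s a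
    proof -
      let ?P = "\<lambda>QQ. \<forall>s a. QQ s a = F s a (\<lambda>s'. \<gamma> * (\<Sum>a'\<in>UNIV. softmax th s' a' * QQ s' a'))"
      have eqv: "(\<forall>s a. ereal (QQ s a) = bellman \<rho> P \<gamma> (softmax th) QQ s a) \<longleftrightarrow> ?P QQ" for QQ
        by (simp add: bell Fe[symmetric])
      obtain Q0 where Q0: "?P Q0"
        using existence[where F=F and \<gamma>=\<gamma> and \<pi>="softmax th", OF monoH transH gam pi_nn softmax_sum] by (elim exE)
      have uniq: "QQ = Q0" if "?P QQ" for QQ
      proof (intro ext)
        fix s a
        have "QQ s a \<le> Q0 s a"
          by (rule comparison[where F=F and \<gamma>=\<gamma> and \<pi>="softmax th" and QA=QQ and QB=Q0 and s=s and a=a,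
                OF monoH transH gam pi_nn softmax_sum eq_refl[OF that[rule_format]] Q0[rule_format]])
        moreover have "Q0 s a \<le> QQ s a"
          by (rule comparison[where F=F and \<gamma>=\<gamma> and \<pi>="softmax th" and QA=Q0 and QB=QQ and s=s and a=a,
                OF monoH transH gam pi_nn softmax_sum eq_refl[OF Q0[rule_format]] that[rule_format]])
        ultimately show "QQ s a = Q0 s a" by (rule order.antisym)
      qed
      have e: "Qpi \<rho> P \<gamma> (softmax th) = Q0"
        unfolding Qpi_def eqv using Q0 uniq by (rule the_equality)
      show ?thesis unfolding e by (rule Q0[rule_format])
    qed
    show ?thesis
    proof (intro allI)
      fix s a
      show "Q s a \<le> Qpi \<rho> P \<gamma> \<pi>' s a"
      proof (rule comparison[where F=F and \<gamma>=\<gamma> and \<pi>=\<pi>', OF monoH transH gam])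
        show "\<And>s a. 0 \<le> \<pi>' s a"
          unfolding \<pi>'_def by (rule pi_nn)
        show "\<And>s. (\<Sum>a\<in>UNIV. \<pi>' s a) = 1"
          unfolding \<pi>'_def by (rule softmax_sum)
        show "\<And>s a. Qpi \<rho> P \<gamma> \<pi>' s a = F s a (\<lambda>s'. \<gamma> * (\<Sum>a'\<in>UNIV. \<pi>' s' a' * Qpi \<rho> P \<gamma> \<pi>' s' a'))"
          unfolding \<pi>'_def by (rule fixp)
        fix s a
        have "Q s a = F s a (\<lambda>s'. \<gamma> * (\<Sum>a'\<in>UNIV. \<pi> s' a' * Q s' a'))"
          unfolding Q_def \<pi>_def by (rule fixp)
        also have "\<dots> \<le> F s a (\<lambda>s'. \<gamma> * (\<Sum>a'\<in>UNIV. \<pi>' s' a' * Q s' a'))"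
          by (rule mono) (use imp gam in \<open>auto intro: mult_left_mono\<close>)
        finally show "Q s a \<le> F s a (\<lambda>s'. \<gamma> * (\<Sum>a'\<in>UNIV. \<pi>' s' a' * Q s' a'))" .
      qed
    qed
  qed
  then have QQ: "\<And>s a. Q s a \<le> Qpi \<rho> P \<gamma> \<pi>' s a" by simp
  show "\<forall>s a. Qpi \<rho> P \<gamma> (softmax (\<theta> t)) s a \<le> Qpi \<rho> P \<gamma> (softmax (\<theta> (Suc t))) s a \<and>
         Vpi \<rho> P \<gamma> (softmax (\<theta> t)) s \<le> Vpi \<rho> P \<gamma> (softmax (\<theta> (Suc t))) s"
  proof (intro allI conjI)
    fix s a
    show "Qpi \<rho> P \<gamma> (softmax (\<theta> t)) s a \<le> Qpi \<rho> P \<gamma> (softmax (\<theta> (Suc t))) s a"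
      using QQ[of s a] unfolding Q_def \<pi>_def \<pi>'_def by simp
    have "Vpi \<rho> P \<gamma> \<pi> s = (\<Sum>a\<in>UNIV. \<pi> s a * Q s a)" by (simp add: Vdef Q_def)
    also have "\<dots> \<le> (\<Sum>a\<in>UNIV. \<pi>' s a * Q s a)" by (rule imp)
    also have "\<dots> \<le> (\<Sum>a\<in>UNIV. \<pi>' s a * Qpi \<rho> P \<gamma> \<pi>' s a)"
      by (rule sum_mono, rule mult_left_mono[OF QQ], unfold \<pi>'_def, rule pi_nn)
    also have "\<dots> = Vpi \<rho> P \<gamma> \<pi>' s" by (simp add: Vdef)
    finally show "Vpi \<rho> P \<gamma> (softmax (\<theta> t)) s \<le> Vpi \<rho> P \<gamma> (softmax (\<theta> (Suc t))) s"
      unfolding \<pi>_def \<pi>'_def .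
  qed
qed

end
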